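(* Let $K^2$ be the Klein bottle, with $\pi_1(K^2)\cong\langle a,b\mid aba^{-1}=b^{-1}\rangle$, and let $\rho:\pi_1(K^2)\to\mathrm{SL}_2(\mathbb C)$ be a representation. Then, up to conjugation, exactly one of the following holds: (1) $\rho(b)=\pm I$ and $\rho(a)$ is arbitrary; (2) $\rho(b)=\pm\begin{pmatrix}\lambda&0\\0&\lambda^{-1}\end{pmatrix}$ with $\lambda\neq\pm1$ and $\rho(a)=\pm\begin{pmatrix}0&1\\-1&0\end{pmatrix}$; (3) $\rho(b)=\pm\begin{pmatrix}1&1\\0&1\end{pmatrix}$ and $\rho(a)=\pm\begin{pmatrix}i&0\\0&-i\end{pmatrix}$. *)

theory Defs
  imports "HOL-Analysis.Analysis"
begin

definition mat2 :: "complex \<Rightarrow> complex \<Rightarrow> complex \<Rightarrow> complex \<Rightarrow> complex^2^2" where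
  "mat2 a b c d = (\<chi> i j. if i = 1 then (if j = 1 then a else b) else (if j = 1 then c else d))"

definition conjm :: "complex^2^2 \<Rightarrow> complex^2^2 \<Rightarrow> complex^2^2" where
  "conjm P M = P ** M ** matrix_inv P"

text \<open>The three normal forms for a pair (rho(a), rho(b)) = (A, B).\<close>
definition kb_case1 :: "complex^2^2 \<Rightarrow> complex^2^2 \<Rightarrow> bool" where
  "kb_case1 A B \<longleftrightarrow> (B = mat 1 \<or> B = - mat 1)"

definition kb_case2 :: "complex^2^2 \<Rightarrow> complex^2^2 \<Rightarrow> bool" where
  "kb_case2 A B \<longleftrightarrow> (\<exists>l. l \<noteq> 0 \<and> l \<noteq> 1 \<and> l \<noteq> -1 \<and>
      (B = mat2 l 0 0 (inverse l) \<or> B = - mat2 l 0 0 (inverse l)) \<and>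
      (A = mat2 0 1 (-1) 0 \<or> A = - mat2 0 1 (-1) 0))"

definition kb_case3 :: "complex^2^2 \<Rightarrow> complex^2^2 \<Rightarrow> bool" where
  "kb_case3 A B \<longleftrightarrow>
      (B = mat2 1 1 0 1 \<or> B = - mat2 1 1 0 1) \<and>
      (A = mat2 \<i> 0 0 (-\<i>) \<or> A = - mat2 \<i> 0 0 (-\<i>))"

definition up_to_conj :: "(complex^2^2 \<Rightarrow> complex^2^2 \<Rightarrow> bool) \<Rightarrow> complex^2^2 \<Rightarrow> complex^2^2 \<Rightarrow> bool" where
  "up_to_conj C A B \<longleftrightarrow> (\<exists>P. invertible P \<and> C (conjm P A) (conjm P B))"

end

theory Submission
  imports Defs
begin


lemma inv_unique:
  fixes A X :: "'a::field^'n^'n"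
  assumes "A ** X = mat 1" shows "matrix_inv A = X"
proof -
  have XA: "X ** A = mat 1" using assms matrix_left_right_inverse by blast
  have "\<exists>Y. A ** Y = mat 1 \<and> Y ** A = mat 1" using assms XA by blast
  hence Y: "A ** matrix_inv A = mat 1 \<and> matrix_inv A ** A = mat 1"
    unfolding matrix_inv_def by (rule someI_ex)
  have "matrix_inv A = matrix_inv A ** (A ** X)" using assms by simp
  also have "\<dots> = X" using Y by (simp add: matrix_mul_assoc)
  finally show ?thesis .
qed

lemma inv_right:
  fixes A :: "'a::field^'n^'n"
  assumes "invertible A" shows "A ** matrix_inv A = mat 1" "matrix_inv A ** A = mat 1"
proof -
  have "\<exists>Y. A ** Y = mat 1 \<and> Y ** A = mat 1" using assms unfolding invertible_def by blast
  hence Y: "A ** matrix_inv A = mat 1 \<and> matrix_inv A ** A = mat 1"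
    unfolding matrix_inv_def by (rule someI_ex)
  thus "A ** matrix_inv A = mat 1" "matrix_inv A ** A = mat 1" by auto
qed

lemma inv_invertible:
  fixes A :: "'a::field^'n^'n"
  assumes "invertible A" shows "invertible (matrix_inv A)"
  using inv_right[OF assms] unfolding invertible_def by blast

lemma conjm_conjm:
  fixes P Q M :: "complex^2^2"
  assumes "invertible P" "invertible Q"
  shows "conjm Q (conjm P M) = conjm (Q ** P) M"
proof -
  have "matrix_inv (Q ** P) = matrix_inv P ** matrix_inv Q"
    apply (rule inv_unique)
  proof -
    have "Q ** P ** (matrix_inv P ** matrix_inv Q) = Q ** (P ** matrix_inv P) ** matrix_inv Q"
      by (simp add: matrix_mul_assoc)
    thus "Q ** P ** (matrix_inv P ** matrix_inv Q) = mat 1" using inv_right[OF assms(1)] inv_right[OF assms(2)] by simp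
  qed
  thus ?thesis unfolding conjm_def by (simp add: matrix_mul_assoc)
qed

lemma conjm_mult:
  fixes P X Y :: "complex^2^2"
  assumes "invertible P"
  shows "conjm P (X ** Y) = conjm P X ** conjm P Y"
  unfolding conjm_def using inv_right[OF assms]
  by (metis matrix_mul_assoc matrix_mul_rid)

lemma conjm_inv:
  fixes P M :: "complex^2^2"
  assumes "invertible P" "invertible M"
  shows "matrix_inv (conjm P M) = conjm P (matrix_inv M)"
  apply (rule inv_unique)
  using inv_right[OF assms(2)] conjm_mult[OF assms(1), of M "matrix_inv M", symmetric]
  by (simp add: conjm_def inv_right[OF assms(1)] matrix_mul_assoc)

lemma det_conjm:
  fixes P M :: "complex^2^2"
  assumes "invertible P"
  shows "det (conjm P M) = det M"
proof -
  have "det P * det (matrix_inv P) = 1" using inv_right[OF assms] det_mul det_I by metis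
  thus ?thesis unfolding conjm_def by (simp add: det_mul)
qed

lemma up_to_conj_reduce:
  fixes P A B :: "complex^2^2"
  assumes "invertible P" "up_to_conj C (conjm P A) (conjm P B)"
  shows "up_to_conj C A B"
  using assms unfolding up_to_conj_def
  by (metis conjm_conjm invertible_mult)

lemma mat2_eta: "M = mat2 (M$1$1) (M$1$2) (M$2$1) (M$2$2)"
  unfolding mat2_def by (simp add: vec_eq_iff forall_2)

lemma mat2_nth: "mat2 a b c d $1$1 = a" "mat2 a b c d $1$2 = b" "mat2 a b c d $2$1 = c" "mat2 a b c d $2$2 = d"
  unfolding mat2_def by simp_all

lemma mat2_eq: "mat2 a b c d = mat2 e f g h \<longleftrightarrow> a = e \<and> b = f \<and> c = g \<and> d = h"
  unfolding mat2_def by (auto simp: vec_eq_iff forall_2)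

lemma mat2_mult: "mat2 a b c d ** mat2 e f g h = mat2 (a*e+b*g) (a*f+b*h) (c*e+d*g) (c*f+d*h)"
  unfolding mat2_def by (simp add: vec_eq_iff forall_2 matrix_matrix_mult_def sum_2)

lemma det_mat2: "det (mat2 a b c d) = a*d - b*c"
  by (simp add: det_2 mat2_nth)

lemma mat1_mat2: "(mat 1 :: complex^2^2) = mat2 1 0 0 1"
  unfolding mat2_def by (simp add: vec_eq_iff forall_2 mat_def)

lemma neg_mat2: "- mat2 a b c d = mat2 (-a) (-b) (-c) (-d)"
  unfolding mat2_def by (simp add: vec_eq_iff forall_2)

lemma inv_mat2: "a*d - b*c \<noteq> 0 \<Longrightarrow>
  matrix_inv (mat2 a b c d) = mat2 (d/(a*d-b*c)) (-b/(a*d-b*c)) (-c/(a*d-b*c)) (a/(a*d-b*c))"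
  apply (rule inv_unique)
proof -
  assume h: "a*d - b*c \<noteq> 0"
  let ?e = "a*d-b*c"
  have "a * (d / ?e) + b * (- c / ?e) = ?e / ?e" "c * (d / ?e) + d * (- c / ?e) = 0"
       "a * (- b / ?e) + b * (a / ?e) = 0" "c * (- b / ?e) + d * (a / ?e) = ?e/?e"
    by (simp_all add: field_simps)
  thus "mat2 a b c d ** mat2 (d/(a*d-b*c)) (-b/(a*d-b*c)) (-c/(a*d-b*c)) (a/(a*d-b*c)) = mat 1" using h by (simp add: mat2_mult mat1_mat2 mat2_eq)
qed

lemma invertible_mat2: "invertible (mat2 a b c d) \<longleftrightarrow> a*d - b*c \<noteq> 0"
  by (simp add: invertible_det_nz det_mat2)


lemma conjm_intro:
  fixes P M X :: "complex^2^2"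
  assumes "invertible P" "P ** M = X ** P" shows "conjm P M = X"
  unfolding conjm_def using assms(2) inv_right[OF assms(1)]
  by (metis matrix_mul_assoc matrix_mul_rid)

lemma conj_mat2: assumes "e = p*u-q*r" "e \<noteq> 0" shows "conjm (mat2 p q r u) (mat2 a b c d) =
  mat2 ((p*a*u - p*b*r + q*c*u - q*d*r)/e) ((-p*a*q + p*b*p - q*c*q + q*d*p)/e)
       ((r*a*u - r*b*r + u*c*u - u*d*r)/e) ((-r*a*q + r*b*p - u*c*q + u*d*p)/e)"
  apply (rule conjm_intro)
  using assms apply (simp add: invertible_mat2)
  apply (simp add: mat2_mult mat2_eq)
  using assms(2) apply (simp add: divide_simps)
  using assms(1) by algebra

definition tr :: "complex^2^2 \<Rightarrow> complex" where "tr M = M$1$1 + M$2$2"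

lemma tr_mat2: "tr (mat2 a b c d) = a + d" by (simp add: tr_def mat2_nth)

lemma tr_conjm: assumes "invertible P" shows "tr (conjm P M) = tr M"
proof -
  obtain p q r u where P: "P = mat2 p q r u" using mat2_eta by blast
  obtain a b c d where M: "M = mat2 a b c d" using mat2_eta by blast
  have h: "p*u-q*r \<noteq> 0" using assms P invertible_mat2 by blast
  show ?thesis unfolding P M using h
    apply (simp add: conj_mat2[OF refl] tr_mat2 del: mult_minus_left)
    apply (simp add: divide_simps)
    by algebra  
qed

lemma conjm_scalar: assumes "invertible P" shows "conjm P (mat2 k 0 0 k) = mat2 k 0 0 k"
proof -
  obtain p q r u where P: "P = mat2 p q r u" using mat2_eta by blast
  have h: "p*u-q*r \<noteq> 0" using assms P invertible_mat2 by blast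
  show ?thesis unfolding P using h
    apply (simp add: conj_mat2[OF refl] mat2_eq del: mult_minus_left)
    apply (simp add: divide_simps)
    by algebra  
qed

lemma conjm_id: "conjm (mat 1) M = M"
proof -
  have "matrix_inv (mat 1 :: complex^2^2) = mat 1" by (rule inv_unique) simp
  thus ?thesis unfolding conjm_def by simp
qed

lemma conjm_back: assumes "invertible P" shows "conjm (matrix_inv P) (conjm P M) = M"
  using conjm_conjm[OF assms inv_invertible[OF assms]] inv_right[OF assms] conjm_id by simp

lemma conjm_pm1: assumes "invertible P"
  shows "(conjm P M = mat 1 \<or> conjm P M = - mat 1) \<longleftrightarrow> (M = mat 1 \<or> M = - mat 1)"
proof -
  have a: "conjm Q (mat 1) = mat 1" "conjm Q (- mat 1) = - mat 1" if "invertible Q" for Q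
    using conjm_scalar[OF that, of 1] conjm_scalar[OF that, of "-1"] by (simp_all add: mat1_mat2 neg_mat2)
  show ?thesis
    using a[OF assms] a[OF inv_invertible[OF assms]] conjm_back[OF assms] by metis
qed

lemma case1_iff: "up_to_conj kb_case1 A B \<longleftrightarrow> (B = mat 1 \<or> B = - mat 1)"
  unfolding up_to_conj_def kb_case1_def
  by (metis conjm_pm1 conjm_id invertible_mat2 mat1_mat2 one_neq_zero diff_zero mult_1 mult_zero_left)

lemma case2_inv: "up_to_conj kb_case2 A B \<Longrightarrow> \<not> (B = mat 1 \<or> B = - mat 1) \<and> tr B \<noteq> 2 \<and> tr B \<noteq> -2"
proof -
  assume "up_to_conj kb_case2 A B"
  then obtain P l where P: "invertible P" and l: "l \<noteq> 0" "l \<noteq> 1" "l \<noteq> -1"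
    and B: "conjm P B = mat2 l 0 0 (inverse l) \<or> conjm P B = - mat2 l 0 0 (inverse l)"
    unfolding up_to_conj_def kb_case2_def by blast
  have t: "tr B = tr (conjm P B)" using tr_conjm[OF P] by simp
  have "l + inverse l \<noteq> 2"
  proof
    assume "l + inverse l = 2"
    hence "l + inverse l - 2 = 0" by simp
    moreover have "(l - 1)^2 = l * (l + inverse l - 2)" using l by (simp add: field_simps power2_eq_square)
    ultimately have "(l - 1)^2 = 0" by simp
    thus False using l by simp
  qed
  moreover have "l + inverse l \<noteq> -2"
  proof
    assume "l + inverse l = -2"
    hence "l + inverse l + 2 = 0" by simp
    moreover have "(l + 1)^2 = l * (l + inverse l + 2)" using l by (simp add: field_simps power2_eq_square)
    ultimately have "(l + 1)^2 = 0" by simp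
    thus False using l by (simp add: add_eq_0_iff2)
  qed
  moreover have "\<not> (conjm P B = mat 1 \<or> conjm P B = - mat 1)"
    using B l by (auto simp: mat1_mat2 neg_mat2 mat2_eq minus_equation_iff[of l])
  moreover have "tr B = l + inverse l \<or> tr B = - (l + inverse l)"
    using B t by (auto simp: tr_mat2 neg_mat2)
  ultimately show ?thesis using conjm_pm1[OF P, of B]
    by (metis minus_minus)
qed

lemma case3_inv: "up_to_conj kb_case3 A B \<Longrightarrow> \<not> (B = mat 1 \<or> B = - mat 1) \<and> (tr B = 2 \<or> tr B = -2)"
proof -
  assume "up_to_conj kb_case3 A B"
  then obtain P where P: "invertible P" 
    and B: "conjm P B = mat2 1 1 0 1 \<or> conjm P B = - mat2 1 1 0 1"
    unfolding up_to_conj_def kb_case3_def by blast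
  have t: "tr B = tr (conjm P B)" using tr_conjm[OF P] by simp
  moreover have "\<not> (conjm P B = mat 1 \<or> conjm P B = - mat 1)"
    using B by (auto simp: mat1_mat2 neg_mat2 mat2_eq)
  ultimately show ?thesis using B t conjm_pm1[OF P, of B]
    by (auto simp: tr_mat2 neg_mat2)
qed




definition kbrel :: "complex^2^2 \<Rightarrow> complex^2^2 \<Rightarrow> bool" where
  "kbrel A B \<longleftrightarrow> det A = 1 \<and> det B = 1 \<and> A ** B ** matrix_inv A = matrix_inv B"

lemma kbrel_conj: assumes "kbrel A B" "invertible P" shows "kbrel (conjm P A) (conjm P B)"
proof -
  have iA: "invertible A" and iB: "invertible B" using assms(1) unfolding kbrel_def
    by (simp_all add: invertible_det_nz)
  have "conjm P A ** conjm P B ** matrix_inv (conjm P A) = conjm P (A ** B ** matrix_inv A)"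
    by (simp add: conjm_inv[OF assms(2) iA] conjm_mult[OF assms(2)])
  also have "\<dots> = matrix_inv (conjm P B)"
    using assms(1) conjm_inv[OF assms(2) iB] unfolding kbrel_def by simp
  finally show ?thesis using assms(1) unfolding kbrel_def by (simp add: det_conjm[OF assms(2)])
qed

lemma kbrel_entries: "kbrel (mat2 p q r u) (mat2 a b c d) \<longleftrightarrow> p*u-q*r = 1 \<and> a*d-b*c = 1 \<and>
   mat2 p q r u ** mat2 a b c d ** mat2 u (-q) (-r) p = mat2 d (-b) (-c) a"
  unfolding kbrel_def det_mat2 by (auto simp: inv_mat2)

lemma csqrt_ex: "\<exists>c::complex. c*c = z" using power2_csqrt[of z] by (metis power2_eq_square)

lemma conj_witness: assumes "invertible P" "C (conjm P A) (conjm P B)" shows "up_to_conj C A B"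
  using assms unfolding up_to_conj_def by blast

lemma diag_case:
  assumes "kbrel A (mat2 l 0 0 m)" "l \<noteq> m"
  shows "up_to_conj kb_case2 A (mat2 l 0 0 m)"
proof -
  obtain p q r u where A: "A = mat2 p q r u" using mat2_eta by blast
  have e: "p*u-q*r = 1" "l*m = 1" and M: "mat2 p q r u ** mat2 l 0 0 m ** mat2 u (-q) (-r) p = mat2 m 0 0 l"
    using assms(1) unfolding A kbrel_entries by auto
  from M have E: "p*l*u - q*m*r = m" "-p*l*q + q*m*p = 0" "r*l*u - u*m*r = 0" "-r*l*q + u*m*p = l"
    by (simp_all add: mat2_mult mat2_eq algebra_simps)
  have lm: "m - l \<noteq> 0" "l - m \<noteq> 0" using assms(2) by (auto simp: right_minus_eq)
  have "p*q*(m-l) = 0" using E(2) by (simp add: algebra_simps)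
  hence pq: "p*q = 0" using lm mult_eq_0_iff by blast
  have "r*u*(l-m) = 0" using E(3) by (simp add: algebra_simps)
  hence ru: "r*u = 0" using lm mult_eq_0_iff by blast
  have p0: "p = 0"
  proof (rule ccontr)
    assume "p \<noteq> 0"
    hence "q = 0" using pq by simp
    hence "p*u = 1" using e by simp
    hence "u \<noteq> 0" by auto
    hence "r = 0" using ru by simp
    have "l*(p*u) = m" using E(1) \<open>q = 0\<close> by (simp add: algebra_simps)
    hence "l = m" using \<open>p*u = 1\<close> by simp
    thus False using assms(2) by simp
  qed
  hence qr: "q*r = -1" using e by algebra
  hence "r \<noteq> 0" "q \<noteq> 0" by auto
  hence u0: "u = 0" using ru by simp
  obtain c where c: "c*c = inverse q" using csqrt_ex by blast
  have c0: "c \<noteq> 0" using c \<open>q \<noteq> 0\<close> by auto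
  have cq: "c*c*q = 1" using c \<open>q \<noteq> 0\<close> by simp
  have rc: "r = - (c*c)" using qr cq by (metis add.inverse_inverse mult.commute mult_minus_left mult_cancel_left2 mult_1 \<open>q \<noteq> 0\<close> mult.left_commute)
  have l0: "l \<noteq> 0" "m = inverse l" using e(2) inverse_unique[OF e(2)] by auto
  have l1: "l \<noteq> 1" "l \<noteq> -1" using assms(2) l0 by auto
  have inv: "invertible (mat2 c 0 0 (inverse c))" using c0 by (simp add: invertible_mat2)
  show ?thesis
  proof (rule conj_witness[OF inv])
    have "conjm (mat2 c 0 0 (inverse c)) A = mat2 0 1 (-1) 0"
      unfolding A p0 u0 using c0 cq rc
      apply (subst conj_mat2[OF refl]) apply simp
      by (simp add: mat2_eq field_simps)
    moreover have "conjm (mat2 c 0 0 (inverse c)) (mat2 l 0 0 m) = mat2 l 0 0 (inverse l)"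
      using c0 l0
      apply (subst conj_mat2[OF refl]) apply simp
      by (simp add: mat2_eq field_simps)
    ultimately show "kb_case2 (conjm (mat2 c 0 0 (inverse c)) A) (conjm (mat2 c 0 0 (inverse c)) (mat2 l 0 0 m))"
      unfolding kb_case2_def using l0 l1 by blast
  qed
qed


lemma sq1: "(l::complex)*l = 1 \<Longrightarrow> l = 1 \<or> l = -1"
proof -
  assume "l*l = 1"
  hence "(l-1)*(l+1) = 0" by algebra
  thus ?thesis by (auto simp: add_eq_0_iff2)
qed

lemma sqm1: "(p::complex)*p = -1 \<Longrightarrow> p = \<i> \<or> p = -\<i>"
proof -
  assume "p*p = -1"
  hence "(p-\<i>)*(p+\<i>) = 0" by (simp add: algebra_simps)
  thus ?thesis by (auto simp: add_eq_0_iff2)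
qed

lemma para_case:
  assumes "kbrel A (mat2 l l 0 l)"
  shows "up_to_conj kb_case3 A (mat2 l l 0 l)"
proof -
  obtain p q r u where A: "A = mat2 p q r u" using mat2_eta by blast
  have e: "p*u-q*r = 1" "l*l = 1" and M: "mat2 p q r u ** mat2 l l 0 l ** mat2 u (-q) (-r) p = mat2 l (-l) 0 l"
    using assms(1) unfolding A kbrel_entries by auto
  from M have E: "(mat2 p q r u ** mat2 l l 0 l ** mat2 u (-q) (-r) p) $2$1 = 0"
     "(mat2 p q r u ** mat2 l l 0 l ** mat2 u (-q) (-r) p) $1$2 = -l"
    by (simp_all add: mat2_nth)
  hence E2: "l*(r*r) = 0" "l * (p*p) = -l" by (simp_all add: mat2_mult mat2_nth algebra_simps)
  have l0: "l \<noteq> 0" using e(2) by auto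
  have r0: "r = 0" using E2(1) l0 by simp
  have pp: "p*p = -1" using E2(2) l0 by (metis mult_minus_right mult_cancel_left mult_1_right)
  have pu: "p*u = 1" using e(1) r0 by simp
  have u: "u = -p" using pp pu by algebra
  have p0: "p \<noteq> 0" using pu by auto
  define t where "t = q/(2*p)"
  have inv: "invertible (mat2 1 t 0 1)" by (simp add: invertible_mat2)
  show ?thesis
  proof (rule conj_witness[OF inv])
    have "conjm (mat2 1 t 0 1) A = mat2 p 0 0 (-p)"
      unfolding A r0 u using p0
      apply (subst conj_mat2[OF refl]) apply simp
      by (simp add: mat2_eq t_def field_simps)
    moreover have "conjm (mat2 1 t 0 1) (mat2 l l 0 l) = mat2 l l 0 l"
      apply (subst conj_mat2[OF refl]) apply simp
      by (simp add: mat2_eq field_simps)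
    ultimately show "kb_case3 (conjm (mat2 1 t 0 1) A) (conjm (mat2 1 t 0 1) (mat2 l l 0 l))"
      unfolding kb_case3_def using sq1[OF e(2)] sqm1[OF pp] by (auto simp: neg_mat2)
  qed
qed

lemma tri_case:
  assumes "kbrel A (mat2 l x 0 m)" "\<not> (mat2 l x 0 m = mat 1 \<or> mat2 l x 0 m = - mat 1)"
  shows "up_to_conj kb_case2 A (mat2 l x 0 m) \<or> up_to_conj kb_case3 A (mat2 l x 0 m)"
proof -
  have lm: "l*m = 1" using assms(1) unfolding kbrel_def by (simp add: det_mat2)
  show ?thesis
  proof (cases "l = m")
    case False
    define y where "y = x/(l-m)"
    have lm0: "l - m \<noteq> 0" using False by (auto simp: right_minus_eq)
    have inv: "invertible (mat2 1 y 0 1)" by (simp add: invertible_mat2)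
    have "conjm (mat2 1 y 0 1) (mat2 l x 0 m) = mat2 l 0 0 m"
      apply (subst conj_mat2[OF refl]) apply simp
      using lm0 by (simp add: mat2_eq y_def field_simps)
    hence "up_to_conj kb_case2 (conjm (mat2 1 y 0 1) A) (conjm (mat2 1 y 0 1) (mat2 l x 0 m))"
      using diag_case[OF _ False] kbrel_conj[OF assms(1) inv] by simp
    thus ?thesis using up_to_conj_reduce[OF inv] by blast
  next
    case True
    have ll: "l*l = 1" using lm True by simp
    have x0: "x \<noteq> 0" using assms(2) True sq1[OF ll] by (auto simp: mat1_mat2 neg_mat2)
    obtain c where c: "c*c = l/x" using csqrt_ex by blast
    have l0: "l \<noteq> 0" using ll by auto
    have c0: "c \<noteq> 0" using c l0 x0 by auto
    have cx: "c*c*x = l" using c x0 by simp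
    have inv: "invertible (mat2 c 0 0 (inverse c))" using c0 by (simp add: invertible_mat2)
    have "conjm (mat2 c 0 0 (inverse c)) (mat2 l x 0 m) = mat2 l l 0 l"
      apply (subst conj_mat2[OF refl]) using c0 apply simp
      using c0 cx True by (simp add: mat2_eq field_simps)
    hence "up_to_conj kb_case3 (conjm (mat2 c 0 0 (inverse c)) A) (conjm (mat2 c 0 0 (inverse c)) (mat2 l x 0 m))"
      using para_case kbrel_conj[OF assms(1) inv] by simp
    thus ?thesis using up_to_conj_reduce[OF inv] by blast
  qed
qed

lemma quad_root: "\<exists>l::complex. l*l - t*l + 1 = 0"
proof -
  obtain z where z: "z*z = t*t - 4" using csqrt_ex by blast
  show ?thesis
    by (rule exI[of _ "(t + z)/2"]) (simp add: field_simps z)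
qed

lemma triangularize:
  assumes "det B = 1"
  shows "\<exists>P l x m. invertible P \<and> conjm P B = mat2 l x 0 m"
proof -
  obtain a b c d where B: "B = mat2 a b c d" using mat2_eta by blast
  have e: "a*d - b*c = 1" using assms B det_mat2 by simp
  show ?thesis
  proof (cases "c = 0")
    case True
    thus ?thesis using conjm_id[of B] B invertible_mat2[of 1 0 0 1] by (auto simp: mat1_mat2)
  next
    case False
    obtain l where l: "l*l - (a+d)*l + 1 = 0" using quad_root by blast
    define w where "w = (d-l)/c"
    have inv: "invertible (mat2 0 (1/c) 1 w)" using False by (simp add: invertible_mat2)
    have "a*w - b + c*w*w - d*w = 0"
    proof -
      have "c*(a*w - b + c*w*w - d*w) = a*(d-l) - b*c + (d-l)*(d-l) - d*(d-l)"
        using False by (simp add: w_def field_simps)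
      also have "\<dots> = 0" using e l by algebra
      finally show ?thesis using False by simp
    qed
    hence "(conjm (mat2 0 (1/c) 1 w) B) $2$1 = 0"
      unfolding B using False
      apply (subst conj_mat2[OF refl]) apply simp
      by (simp add: mat2_nth algebra_simps)
    thus ?thesis using inv mat2_eta[of "conjm (mat2 0 (1/c) 1 w) B"] by metis
  qed
qed


theorem lemma4p1:
  fixes A B :: "complex^2^2"
  assumes "det A = 1" and "det B = 1"
    and "A ** B ** matrix_inv A = matrix_inv B"
  shows "(up_to_conj kb_case1 A B \<and> \<not> up_to_conj kb_case2 A B \<and> \<not> up_to_conj kb_case3 A B) \<or>
         (\<not> up_to_conj kb_case1 A B \<and> up_to_conj kb_case2 A B \<and> \<not> up_to_conj kb_case3 A B) \<or>
         (\<not> up_to_conj kb_case1 A B \<and> \<not> up_to_conj kb_case2 A B \<and> up_to_conj kb_case3 A B)"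
proof -
  have rel: "kbrel A B" using assms unfolding kbrel_def by simp
  have "up_to_conj kb_case1 A B \<or> up_to_conj kb_case2 A B \<or> up_to_conj kb_case3 A B"
  proof (cases "B = mat 1 \<or> B = - mat 1")
    case True
    thus ?thesis using case1_iff by blast
  next
    case False
    obtain P l x m where P: "invertible P" and PB: "conjm P B = mat2 l x 0 m"
      using triangularize[OF assms(2)] by blast
    have r: "kbrel (conjm P A) (mat2 l x 0 m)" using kbrel_conj[OF rel P] PB by simp
    have "\<not> (mat2 l x 0 m = mat 1 \<or> mat2 l x 0 m = - mat 1)"
      using False conjm_pm1[OF P, of B] PB by simp
    hence "up_to_conj kb_case2 (conjm P A) (conjm P B) \<or> up_to_conj kb_case3 (conjm P A) (conjm P B)"
      using tri_case[OF r] PB by simp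
    thus ?thesis using up_to_conj_reduce[OF P] by blast
  qed
  thus ?thesis using case1_iff[of A B] case2_inv[of A B] case3_inv[of A B] by blast
qed

end
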